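(* Let $\pi_E$ be a deterministic expert policy in a finite MDP whose induced chain $P_E$ is irreducible and aperiodic, with stationary state-action distribution $\rho^E$ and mixing time $\tau_{\mathrm{mix}}$. Let $D$ be the set of state-action pairs visited by an expert trajectory, and $R_{\mathrm{int}}(s,a)=\mathbb{1}\{(s,a)\in D\}$. Let $\pi_I$ be an imitation learner policy whose induced chain is irreducible and aperiodic, with stationary state-action distribution $\rho^I$, and suppose $\mathbb{E}_{\rho^I}[R_{\mathrm{int}}]=1-\kappa$. Then for every reward function $R:S\times A\to[0,1]$, $$\mathbb{E}_{\rho^I}[R]\;\ge\;(1-\kappa)\,\mathbb{E}_{\rho^E}[R]-4\tau_{\mathrm{mix}}\,\kappa.$$
   Context: For a policy $\pi$ in a finite MDP (states $S$, actions $A$, kernel $T$), $P_\pi(s,s')=\sum_a\pi(a\mid s)T(s'\mid s,a)$; if irreducible and aperiodic it has stationary distribution $\rho^\pi_S$, and $\rho^\pi(s,a)=\rho^\pi_S(s)\pi(a\mid s)$; $\mathbb{E}_{\rho}[R]=\sum_{s,a}\rho(s,a)R(s,a)$. Here $P_E=P_{\pi_E}$, $\rho^E=\rho^{\pi_E}$, $\rho^E_S=\rho^{\pi_E}_S$, $\rho^I=\rho^{\pi_I}$. The expert trajectory is generated by running $\pi_E$ in the MDP, so every $(s,a)\in D$ satisfies $\pi_E(a\mid s)=1$. The mixing time $\tau_{\mathrm{mix}}$ is the smallest integer $t\ge0$ with $\max_{s'}\|\mathbb{1}(s')^\top P_E^t-\rho^E_S\|_{\mathrm{TV}}\le\tfrac14$,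 where $\|\rho_1-\rho_2\|_{\mathrm{TV}}=\sup_M|\rho_1(M)-\rho_2(M)|$. *)

theory Defs
  imports Complex_Main
begin

text \<open>Finite MDP: states 's::finite, actions 'a::finite, kernel T s a s' = T(s'|s,a).
 A policy pol s a = pol(a|s).\<close>

definition stoch_kernel :: "('s::finite \<Rightarrow> 'a::finite \<Rightarrow> 's \<Rightarrow> real) \<Rightarrow> bool" where
  "stoch_kernel T \<longleftrightarrow> (\<forall>s a s'. 0 \<le> T s a s') \<and> (\<forall>s a. (\<Sum>s'\<in>UNIV. T s a s') = 1)"

definition policy :: "('s::finite \<Rightarrow> 'a::finite \<Rightarrow> real) \<Rightarrow> bool" where
  "policy pol \<longleftrightarrow> (\<forall>s a. 0 \<le> pol s a) \<and> (\<forall>s. (\<Sum>a\<in>UNIV. pol s a) = 1)"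

definition deterministic_policy :: "('s::finite \<Rightarrow> 'a::finite \<Rightarrow> real) \<Rightarrow> bool" where
  "deterministic_policy pol \<longleftrightarrow> policy pol \<and> (\<forall>s. \<exists>a. pol s a = 1)"

definition induced_chain :: "('s::finite \<Rightarrow> 'a::finite \<Rightarrow> real) \<Rightarrow> ('s \<Rightarrow> 'a \<Rightarrow> 's \<Rightarrow> real) \<Rightarrow> 's \<Rightarrow> 's \<Rightarrow> real" where
  "induced_chain pol T s s' = (\<Sum>a\<in>UNIV. pol s a * T s a s')"

fun mpow :: "('s::finite \<Rightarrow> 's \<Rightarrow> real) \<Rightarrow> nat \<Rightarrow> 's \<Rightarrow> 's \<Rightarrow> real" where
  "mpow P 0 s s' = (if s = s' then 1 else 0)"
| "mpow P (Suc n) s s' = (\<Sum>u\<in>UNIV. mpow P n s u * P u s')"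

definition irreducible_chain :: "('s::finite \<Rightarrow> 's \<Rightarrow> real) \<Rightarrow> bool" where
  "irreducible_chain P \<longleftrightarrow> (\<forall>s s'. \<exists>n>0. mpow P n s s' > 0)"

definition aperiodic_chain :: "('s::finite \<Rightarrow> 's \<Rightarrow> real) \<Rightarrow> bool" where
  "aperiodic_chain P \<longleftrightarrow> (\<forall>s. Gcd {n::nat. n > 0 \<and> mpow P n s s > 0} = 1)"

definition prob_dist :: "('s::finite \<Rightarrow> real) \<Rightarrow> bool" where
  "prob_dist p \<longleftrightarrow> (\<forall>s. 0 \<le> p s) \<and> (\<Sum>s\<in>UNIV. p s) = 1"

definition stationary_dist :: "('s::finite \<Rightarrow> 's \<Rightarrow> real) \<Rightarrow> ('s \<Rightarrow> real) \<Rightarrow> bool" where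
  "stationary_dist P rho \<longleftrightarrow> prob_dist rho \<and> (\<forall>s'. (\<Sum>s\<in>UNIV. rho s * P s s') = rho s')"

definition tv_dist :: "('s::finite \<Rightarrow> real) \<Rightarrow> ('s \<Rightarrow> real) \<Rightarrow> real" where
  "tv_dist p q = Max ((\<lambda>M. \<bar>(\<Sum>x\<in>M. p x) - (\<Sum>x\<in>M. q x)\<bar>) ` (UNIV :: 's set set))"

definition mixing_time :: "('s::finite \<Rightarrow> 's \<Rightarrow> real) \<Rightarrow> ('s \<Rightarrow> real) \<Rightarrow> nat" where
  "mixing_time P rho = (LEAST t. Max ((\<lambda>s'. tv_dist (mpow P t s') rho) ` UNIV) \<le> 1/4)"

text \<open>State-action expectation E_rho[R] with rho(s,a) = rhoS(s) pi(a|s).\<close>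
definition sa_expect :: "('s::finite \<Rightarrow> real) \<Rightarrow> ('s \<Rightarrow> 'a::finite \<Rightarrow> real) \<Rightarrow> ('s \<Rightarrow> 'a \<Rightarrow> real) \<Rightarrow> real" where
  "sa_expect rhoS pol R = (\<Sum>s\<in>UNIV. \<Sum>a\<in>UNIV. rhoS s * pol s a * R s a)"

definition trajectory :: "('s::finite \<Rightarrow> 'a::finite \<Rightarrow> real) \<Rightarrow> ('s \<Rightarrow> 'a \<Rightarrow> 's \<Rightarrow> real) \<Rightarrow> 's list \<Rightarrow> 'a list \<Rightarrow> bool" where
  "trajectory pol T ss as \<longleftrightarrow> length ss = length as \<and>
     (\<forall>t < length ss. pol (ss ! t) (as ! t) > 0) \<and>
     (\<forall>t. Suc t < length ss \<longrightarrow> T (ss ! t) (as ! t) (ss ! Suc t) > 0)"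

end

theory Submission
  imports Defs
begin


lemma semi_mult:
  fixes A :: "nat set"
  assumes z: "0 \<in> A" and add: "\<And>a b. a \<in> A \<Longrightarrow> b \<in> A \<Longrightarrow> a + b \<in> A"
    and a: "a \<in> A"
  shows "k * a \<in> A"
  by (induction k) (auto simp: z add a)

lemma semi_bez:
  fixes A :: "nat set"
  assumes z: "0 \<in> A" and add: "\<And>a b. a \<in> A \<Longrightarrow> b \<in> A \<Longrightarrow> a + b \<in> A"
    and fin: "finite F" and sub: "F \<subseteq> A"
  shows "\<exists>p\<in>A. \<exists>q\<in>A. p = q + Gcd F"
  using fin sub
proof (induction F rule: finite_induct)
  case empty
  then show ?case using z by auto
next
  case (insert s F)
  then obtain p q where pq: "p \<in> A" "q \<in> A" "p = q + Gcd F" by auto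
  have sA: "s \<in> A" using insert by auto
  show ?case
  proof (cases "s = 0")
    case True
    have "p = q + Gcd (insert s F)" using pq True by simp
    then show ?thesis using pq by blast
  next
    case False
    then obtain x y where xy: "s * x = Gcd F * y + gcd s (Gcd F)"
      using bezout_nat by blast
    have eqn: "s * x + q * y = p * y + Gcd (insert s F)"
      using xy pq(3) by (simp add: algebra_simps)
    have i1: "x * s \<in> A" by (rule semi_mult[OF z add sA])
    have i2: "y * q \<in> A" by (rule semi_mult[OF z add pq(2)])
    have i3: "y * p \<in> A" by (rule semi_mult[OF z add pq(1)])
    have A1: "s * x + q * y \<in> A"
      using add[OF i1 i2] by (simp add: mult.commute)
    have A2: "p * y \<in> A"
      using i3 by (simp add: mult.commute)
    show ?thesis using eqn A1 A2 by blast
  qed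
qed

lemma gcd_finite_sub:
  fixes S :: "nat set"
  assumes g: "Gcd S = 1" and pos: "\<And>s. s \<in> S \<Longrightarrow> s > 0"
  shows "\<exists>F. finite F \<and> F \<subseteq> S \<and> Gcd F = 1"
proof -
  have Sne: "S \<noteq> {}" using g by auto
  then obtain s0 where s0: "s0 \<in> S" by auto
  define P where "P = (\<lambda>g. \<exists>F. finite F \<and> F \<subseteq> S \<and> F \<noteq> {} \<and> g = Gcd F)"
  have "P (Gcd {s0})" unfolding P_def using s0 by (intro exI[of _ "{s0}"]) auto
  hence Pg: "P (LEAST g. P g)" by (rule LeastI)
  define g0 where "g0 = (LEAST g. P g)"
  obtain F where F: "finite F" "F \<subseteq> S" "F \<noteq> {}" "g0 = Gcd F"
    using Pg unfolding P_def g0_def by auto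
  have g0pos: "g0 > 0"
  proof -
    obtain f where "f \<in> F" using F by auto
    hence "f > 0" using F pos by auto
    hence "\<not> F \<subseteq> {0}" using \<open>f \<in> F\<close> by auto
    hence "Gcd F \<noteq> 0" by (simp add: Gcd_0_iff)
    thus ?thesis using F(4) by (metis gr0I)
  qed
  have "g0 dvd s" if sS: "s \<in> S" for s
  proof -
    have "P (gcd s g0)" unfolding P_def using F sS
      by (intro exI[of _ "insert s F"]) auto
    hence "g0 \<le> gcd s g0" unfolding g0_def by (rule Least_le)
    moreover have "gcd s g0 \<le> g0" using g0pos by (simp add: dvd_imp_le)
    ultimately have "gcd s g0 = g0" by simp
    thus ?thesis by (metis gcd_dvd1)
  qed
  hence "g0 dvd Gcd S" by (simp add: Gcd_greatest)
  hence "g0 = 1" using g by simp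
  thus ?thesis using F by (intro exI[of _ F]) simp
qed

lemma semigroup_gcd:
  fixes A :: "nat set"
  assumes z: "0 \<in> A" and add: "\<And>a b. a \<in> A \<Longrightarrow> b \<in> A \<Longrightarrow> a + b \<in> A"
    and g: "Gcd {n. n > 0 \<and> n \<in> A} = 1"
  shows "\<exists>N. \<forall>n\<ge>N. n \<in> A"
proof -
  obtain F where F: "finite F" "F \<subseteq> {n. n > 0 \<and> n \<in> A}" "Gcd F = 1"
    using gcd_finite_sub[OF g] by auto
  then obtain p q where pq: "p \<in> A" "q \<in> A" "p = q + 1"
    using semi_bez[OF z add, of F] by auto
  have "\<forall>n\<ge>q*q. n \<in> A"
  proof (intro allI impI)
    fix n assume n: "q * q \<le> n"
    show "n \<in> A"
    proof (cases "q = 0")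
      case True
      hence "p = 1" using pq by simp
      hence "n * 1 \<in> A" using semi_mult[OF z add pq(1)] by metis
      thus ?thesis by simp
    next
      case False
      define a where "a = n div q"
      define r where "r = n mod q"
      have nr: "n = a * q + r" unfolding a_def r_def by simp
      have rq: "r < q" unfolding r_def using False by simp
      have "q * q div q \<le> n div q" using n by (rule div_le_mono)
      hence "q \<le> a" unfolding a_def using False by simp
      hence ra: "r \<le> a" using rq by simp
      hence "r * q \<le> a * q" by (rule mult_le_mono1)
      hence e1: "(a - r) * q + r * q = a * q" by (simp add: diff_mult_distrib)
      have "r * p = r * q + r" using pq(3) by simp
      hence "n = (a - r) * q + r * p" using nr e1 by simp
      moreover have "(a - r) * q \<in> A" by (rule semi_mult[OF z add pq(2)])
      moreover have "r * p \<in> A" by (rule semi_mult[OF z add pq(1)])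
      ultimately show ?thesis using add by metis
    qed
  qed
  thus ?thesis by blast
qed


definition stoch :: "('s::finite \<Rightarrow> 's \<Rightarrow> real) \<Rightarrow> bool" where
  "stoch P \<longleftrightarrow> (\<forall>x y. 0 \<le> P x y) \<and> (\<forall>x. (\<Sum>y\<in>UNIV. P x y) = 1)"

definition vm :: "('s::finite \<Rightarrow> real) \<Rightarrow> ('s \<Rightarrow> 's \<Rightarrow> real) \<Rightarrow> 's \<Rightarrow> real" where
  "vm v P y = (\<Sum>x\<in>UNIV. v x * P x y)"

definition n1 :: "('s::finite \<Rightarrow> real) \<Rightarrow> real" where
  "n1 v = (\<Sum>x\<in>UNIV. \<bar>v x\<bar>)"

lemma delta_l: "(\<Sum>u\<in>UNIV. (if x = u then 1 else 0) * (f u :: real)) = f (x::'s::finite)"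
proof -
  have "(\<Sum>u\<in>UNIV. (if x = u then 1 else 0) * f u) = (\<Sum>u\<in>UNIV. (if x = u then f u else 0))"
    by (rule sum.cong) auto
  also have "\<dots> = f x" by simp
  finally show ?thesis .
qed

lemma delta_r: "(\<Sum>u\<in>UNIV. (f u :: real) * (if u = x then 1 else 0)) = f (x::'s::finite)"
proof -
  have "(\<Sum>u\<in>UNIV. f u * (if u = x then 1 else 0)) = (\<Sum>u\<in>UNIV. (if x = u then f u else 0))"
    by (rule sum.cong) auto
  also have "\<dots> = f x" by simp
  finally show ?thesis .
qed

lemma swap_assoc:
  fixes a :: "'a::finite \<Rightarrow> real" and b :: "'a \<Rightarrow> 'b::finite \<Rightarrow> real" and c :: "'b \<Rightarrow> real"
  shows "(\<Sum>u\<in>UNIV. (\<Sum>y\<in>UNIV. a y * b y u) * c u) = (\<Sum>y\<in>UNIV. a y * (\<Sum>u\<in>UNIV. b y u * (c u :: real)))"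
proof -
  have "(\<Sum>u\<in>UNIV. (\<Sum>y\<in>UNIV. a y * b y u) * c u) = (\<Sum>u\<in>UNIV. \<Sum>y\<in>UNIV. a y * b y u * c u)"
    by (simp add: sum_distrib_right)
  also have "\<dots> = (\<Sum>y\<in>UNIV. \<Sum>u\<in>UNIV. a y * b y u * c u)" by (rule sum.swap)
  also have "\<dots> = (\<Sum>y\<in>UNIV. a y * (\<Sum>u\<in>UNIV. b y u * c u))"
    by (simp add: sum_distrib_left mult.assoc)
  finally show ?thesis .
qed

lemma mpow_add: "mpow P (m + n) x z = (\<Sum>y\<in>UNIV. mpow P m x y * mpow P n y z)"
proof (induction n arbitrary: z)
  case 0
  then show ?case by (simp only: add_0_right mpow.simps delta_r)
next
  case (Suc n)
  have "mpow P (m + Suc n) x z = (\<Sum>u\<in>UNIV. (\<Sum>y\<in>UNIV. mpow P m x y * mpow P n y u) * P u z)"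
    using Suc by simp
  also have "\<dots> = (\<Sum>y\<in>UNIV. mpow P m x y * (\<Sum>u\<in>UNIV. mpow P n y u * P u z))"
    by (rule swap_assoc)
  finally show ?case by simp
qed

lemma mpow_1: "mpow P 1 x y = P x y"
  by (simp only: One_nat_def mpow.simps delta_l)

lemma mpow_nonneg: "stoch P \<Longrightarrow> 0 \<le> mpow P n x y"
  by (induction n arbitrary: y) (auto simp: stoch_def intro!: sum_nonneg)

lemma mpow_rowsum: "stoch P \<Longrightarrow> (\<Sum>y\<in>UNIV. mpow P n x y) = 1"
proof (induction n)
  case 0
  then show ?case by simp
next
  case (Suc n)
  have "(\<Sum>y\<in>UNIV. mpow P (Suc n) x y) = (\<Sum>y\<in>UNIV. \<Sum>u\<in>UNIV. mpow P n x u * P u y)"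
    by simp
  also have "\<dots> = (\<Sum>u\<in>UNIV. \<Sum>y\<in>UNIV. mpow P n x u * P u y)" by (rule sum.swap)
  also have "\<dots> = (\<Sum>u\<in>UNIV. mpow P n x u * (\<Sum>y\<in>UNIV. P u y))"
    by (simp add: sum_distrib_left)
  also have "\<dots> = 1" using Suc by (simp add: stoch_def)
  finally show ?case .
qed

lemma stoch_mpow: "stoch P \<Longrightarrow> stoch (mpow P n)"
  unfolding stoch_def[of "mpow P n"] using mpow_nonneg mpow_rowsum by blast

lemma vm_assoc: "vm v (\<lambda>x z. \<Sum>y\<in>UNIV. A x y * B y z) = vm (vm v A) B"
proof (rule ext)
  fix z
  have "vm v (\<lambda>x z. \<Sum>y\<in>UNIV. A x y * B y z) z = (\<Sum>x\<in>UNIV. \<Sum>y\<in>UNIV. v x * A x y * B y z)"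
    unfolding vm_def by (simp add: sum_distrib_left mult.assoc)
  also have "\<dots> = (\<Sum>y\<in>UNIV. \<Sum>x\<in>UNIV. v x * A x y * B y z)" by (rule sum.swap)
  also have "\<dots> = vm (vm v A) B z"
    unfolding vm_def by (simp add: sum_distrib_right)
  finally show "vm v (\<lambda>x z. \<Sum>y\<in>UNIV. A x y * B y z) z = vm (vm v A) B z" .
qed

lemma vm_mpow_add: "vm v (mpow P (a + b)) = vm (vm v (mpow P a)) (mpow P b)"
proof -
  have "mpow P (a + b) = (\<lambda>x z. \<Sum>y\<in>UNIV. mpow P a x y * mpow P b y z)"
    by (intro ext) (rule mpow_add)
  thus ?thesis by (simp add: vm_assoc)
qed

lemma vm_mpow0: "vm v (mpow P 0) = v"
  unfolding vm_def[abs_def] by (simp only: mpow.simps delta_r)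

lemma vm_mpow1: "vm v (mpow P 1) = vm v P"
  unfolding vm_def[abs_def] mpow_1 by simp

lemma vm_stationary: "stationary_dist P \<rho> \<Longrightarrow> vm \<rho> (mpow P n) = \<rho>"
proof (induction n)
  case 0 then show ?case by (simp only: vm_mpow0)
next
  case (Suc n)
  have "vm \<rho> (mpow P (n + 1)) = vm (vm \<rho> (mpow P n)) (mpow P 1)" by (rule vm_mpow_add)
  also have "\<dots> = vm \<rho> P" by (simp only: Suc.IH[OF Suc.prems] vm_mpow1)
  also have "\<dots> = \<rho>" using Suc.prems unfolding stationary_dist_def vm_def[abs_def] by simp
  finally show ?case by (simp only: Suc_eq_plus1)
qed

lemma vm_add: "vm (\<lambda>x. a x + b x) Q = (\<lambda>y. vm a Q y + vm b Q y)"
  unfolding vm_def[abs_def] by (simp add: distrib_right sum.distrib)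

lemma vm_diff: "vm (\<lambda>x. a x - b x) Q = (\<lambda>y. vm a Q y - vm b Q y)"
  unfolding vm_def[abs_def] by (simp add: left_diff_distrib sum_subtractf)

lemma sum_vm: assumes "stoch Q" shows "sum (vm v Q) UNIV = sum v UNIV"
proof -
  have "sum (vm v Q) UNIV = (\<Sum>y\<in>UNIV. \<Sum>x\<in>UNIV. v x * Q x y)" unfolding vm_def by simp
  also have "\<dots> = (\<Sum>x\<in>UNIV. \<Sum>y\<in>UNIV. v x * Q x y)" by (rule sum.swap)
  also have "\<dots> = (\<Sum>x\<in>UNIV. v x * (\<Sum>y\<in>UNIV. Q x y))" by (simp add: sum_distrib_left)
  also have "\<dots> = sum v UNIV" using assms unfolding stoch_def by simp
  finally show ?thesis .
qed

lemma n1_vm: assumes "stoch Q" shows "n1 (vm v Q) \<le> n1 v"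
proof -
  have "n1 (vm v Q) \<le> (\<Sum>y\<in>UNIV. \<Sum>x\<in>UNIV. \<bar>v x\<bar> * Q x y)"
    unfolding n1_def vm_def
    by (intro sum_mono order_trans[OF sum_abs] eq_refl sum.cong)
      (use assms in \<open>auto simp: abs_mult stoch_def\<close>)
  also have "\<dots> = (\<Sum>x\<in>UNIV. \<Sum>y\<in>UNIV. \<bar>v x\<bar> * Q x y)" by (rule sum.swap)
  also have "\<dots> = (\<Sum>x\<in>UNIV. \<bar>v x\<bar> * (\<Sum>y\<in>UNIV. Q x y))" by (simp add: sum_distrib_left)
  also have "\<dots> = n1 v" using assms unfolding n1_def stoch_def by simp
  finally show ?thesis .
qed



lemma n1_contract:
  assumes Q: "stoch Q" and d: "\<And>x y. \<delta> \<le> Q x y" and z: "sum v UNIV = 0"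
  shows "n1 (vm v Q) \<le> (1 - real (card (UNIV :: 's set)) * \<delta>) * n1 (v :: 's::finite \<Rightarrow> real)"
proof -
  have eq: "vm v Q y = (\<Sum>x\<in>UNIV. v x * (Q x y - \<delta>))" for y
  proof -
    have "(\<Sum>x\<in>UNIV. v x * (Q x y - \<delta>)) = vm v Q y - (\<Sum>x\<in>UNIV. v x) * \<delta>"
      unfolding vm_def by (simp add: right_diff_distrib sum_subtractf sum_distrib_right)
    thus ?thesis using z by simp
  qed
  have "n1 (vm v Q) \<le> (\<Sum>y\<in>UNIV. \<Sum>x\<in>UNIV. \<bar>v x\<bar> * (Q x y - \<delta>))"
    unfolding n1_def eq
    by (intro sum_mono order_trans[OF sum_abs] eq_refl sum.cong) (auto simp: abs_mult d)
  also have "\<dots> = (\<Sum>x\<in>UNIV. \<Sum>y\<in>UNIV. \<bar>v x\<bar> * (Q x y - \<delta>))" by (rule sum.swap)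
  also have "\<dots> = (\<Sum>x\<in>UNIV. \<bar>v x\<bar> * (\<Sum>y\<in>UNIV. Q x y - \<delta>))"
    by (simp add: sum_distrib_left)
  also have "\<dots> = (\<Sum>x\<in>UNIV. \<bar>v x\<bar> * (1 - real (card (UNIV :: 's set)) * \<delta>))"
    using Q unfolding stoch_def by (simp add: sum_subtractf)
  also have "\<dots> = (1 - real (card (UNIV :: 's set)) * \<delta>) * n1 v"
    unfolding n1_def by (simp add: sum_distrib_right mult.commute)
  finally show ?thesis .
qed

lemma tv_ge: "\<bar>(\<Sum>x\<in>M. p x) - (\<Sum>x\<in>M. q x)\<bar> \<le> tv_dist p (q :: 's::finite \<Rightarrow> real)"
  unfolding tv_dist_def by (rule Max_ge) auto

lemma tv_le_n1: "tv_dist p q \<le> n1 (\<lambda>x. p x - q (x :: 's::finite))"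
proof -
  have "\<bar>(\<Sum>x\<in>M. p x) - (\<Sum>x\<in>M. q x)\<bar> \<le> n1 (\<lambda>x. p x - q x)" for M :: "'s set"
  proof -
    have "\<bar>(\<Sum>x\<in>M. p x) - (\<Sum>x\<in>M. q x)\<bar> \<le> (\<Sum>x\<in>M. \<bar>p x - q x\<bar>)"
      unfolding sum_subtractf[symmetric] by (rule sum_abs)
    also have "\<dots> \<le> n1 (\<lambda>x. p x - q x)" unfolding n1_def
      by (rule sum_mono2) auto
    finally show ?thesis .
  qed
  thus ?thesis unfolding tv_dist_def by (subst Max_le_iff) auto
qed

lemma n1_le_tv:
  assumes "sum p UNIV = sum q (UNIV :: 's::finite set)"
  shows "n1 (\<lambda>x. p x - q x) \<le> 2 * tv_dist p q"
proof -
  define M where "M = {x. q x \<le> p x}"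
  have s0: "(\<Sum>x\<in>UNIV. p x - q x) = 0" using assms by (simp add: sum_subtractf)
  have a: "\<bar>p x - q x\<bar> = 2 * (if x \<in> M then p x - q x else 0) - (p x - q x)" for x
    unfolding M_def by auto
  have "n1 (\<lambda>x. p x - q x) = 2 * (\<Sum>x\<in>UNIV. (if x \<in> M then p x - q x else 0)) - (\<Sum>x\<in>UNIV. p x - q x)"
    unfolding n1_def a by (simp add: sum_subtractf sum_distrib_left)
  also have "\<dots> = 2 * (\<Sum>x\<in>UNIV. (if x \<in> M then p x - q x else 0))" using s0 by simp
  also have "(\<Sum>x\<in>UNIV. (if x \<in> M then p x - q x else 0)) = (\<Sum>x\<in>M. p x) - (\<Sum>x\<in>M. q x)"
    by (simp add: sum.If_cases sum_subtractf)
  also have "\<dots> \<le> tv_dist p q" using tv_ge[where M=M and p=p and q=q] by simp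
  finally show ?thesis by simp
qed



lemma mpow_ge: assumes "stoch P"
  shows "mpow P m x y * mpow P n y z \<le> mpow P (m + n) x z"
  unfolding mpow_add
  by (rule member_le_sum) (auto intro!: mult_nonneg_nonneg mpow_nonneg[OF assms])

lemma primitive:
  assumes P: "stoch P" and irr: "irreducible_chain P" and ap: "aperiodic_chain P"
  shows "\<exists>N. \<forall>x y. 0 < mpow P N x y"
proof -
  have ev: "\<exists>K. \<forall>t\<ge>K. 0 < mpow P t (fst p) (snd p)" for p
  proof -
    define x where "x = fst p"
    define y where "y = snd p"
    define A where "A = {n. 0 < mpow P n x x}"
    have z: "0 \<in> A" unfolding A_def by simp
    have add: "a + b \<in> A" if "a \<in> A" "b \<in> A" for a b
    proof -
      have "0 < mpow P a x x * mpow P b x x" using that unfolding A_def by simp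
      also have "\<dots> \<le> mpow P (a + b) x x" by (rule mpow_ge[OF P])
      finally show ?thesis unfolding A_def by simp
    qed
    have "Gcd {n. n > 0 \<and> n \<in> A} = 1"
      using ap unfolding aperiodic_chain_def A_def by simp
    then obtain N0 where N0: "\<And>n. N0 \<le> n \<Longrightarrow> n \<in> A"
      using semigroup_gcd[OF z add] by blast
    obtain m where m: "m > 0" "0 < mpow P m x y"
      using irr unfolding irreducible_chain_def by blast
    have "0 < mpow P t x y" if t: "N0 + m \<le> t" for t
    proof -
      have "0 < mpow P (t - m) x x * mpow P m x y"
        using N0[of "t - m"] t m unfolding A_def by simp
      also have "\<dots> \<le> mpow P (t - m + m) x y" by (rule mpow_ge[OF P])
      finally show ?thesis using t by simp
    qed
    thus ?thesis unfolding x_def y_def by blast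
  qed
  then obtain K where K: "\<And>p t. K p \<le> t \<Longrightarrow> 0 < mpow P t (fst p) (snd p)"
    by metis
  define N where "N = (\<Sum>p\<in>UNIV. K p)"
  have "0 < mpow P N x y" for x y
  proof -
    have "K (x, y) \<le> N" unfolding N_def by (rule member_le_sum) auto
    thus ?thesis using K[of "(x, y)" N] by simp
  qed
  thus ?thesis by blast
qed

lemma mixing_exists:
  fixes P :: "'s::finite \<Rightarrow> 's \<Rightarrow> real"
  assumes P: "stoch P" and irr: "irreducible_chain P" and ap: "aperiodic_chain P"
    and st: "stationary_dist P \<rho>"
  shows "\<exists>t. Max ((\<lambda>s'. tv_dist (mpow P t s') \<rho>) ` UNIV) \<le> 1/4"
proof -
  obtain N where N: "\<And>x y. 0 < mpow P N x y" using primitive[OF P irr ap] by blast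
  define \<delta> where "\<delta> = Min (range (\<lambda>p. mpow P N (fst p) (snd p)))"
  have dle: "\<delta> \<le> mpow P N x y" for x y
    unfolding \<delta>_def by (rule Min_le) (auto intro: image_eqI[of _ _ "(x, y)"])
  have dpos: "0 < \<delta>" unfolding \<delta>_def using N by (subst Min_gr_iff) auto
  define c where "c = 1 - real (card (UNIV :: 's set)) * \<delta>"
  have cpos: "0 < card (UNIV :: 's set)" by (simp add: card_gt_0_iff)
  have c1: "c < 1" unfolding c_def using cpos dpos by simp
  have c0: "0 \<le> c"
  proof -
    have "(\<Sum>y\<in>(UNIV :: 's set). \<delta>) \<le> (\<Sum>y\<in>UNIV. mpow P N undefined y)" by (rule sum_mono) (rule dle)
    also have "\<dots> = 1" by (rule mpow_rowsum[OF P])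
    finally show ?thesis unfolding c_def by simp
  qed
  obtain k where k: "c ^ k < 1/8" using real_arch_pow_inv[OF _ c1, of "1/8"] by auto
  have contr: "sum v UNIV = 0 \<longrightarrow> n1 (vm v (mpow P (j * N))) \<le> c ^ j * n1 v" for j v
  proof (induction j arbitrary: v)
    case 0
    then show ?case by (simp only: mult_0 vm_mpow0 power_0 mult_1) simp
  next
    case (Suc j)
    show ?case
    proof
      assume z: "sum v UNIV = 0"
      define w where "w = vm v (mpow P (j * N))"
      have wz: "sum w UNIV = 0" unfolding w_def using z by (simp add: sum_vm stoch_mpow[OF P])
      have "vm v (mpow P (Suc j * N)) = vm w (mpow P N)"
        unfolding w_def by (metis vm_mpow_add add.commute mult_Suc)
      hence "n1 (vm v (mpow P (Suc j * N))) \<le> c * n1 w"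
        using n1_contract[OF stoch_mpow[OF P] dle wz] unfolding c_def by simp
      also have "\<dots> \<le> c * (c ^ j * n1 v)"
        using Suc.IH z c0 unfolding w_def by (simp add: mult_left_mono)
      finally show "n1 (vm v (mpow P (Suc j * N))) \<le> c ^ Suc j * n1 v" by (simp add: mult.assoc)
    qed
  qed
  have "tv_dist (mpow P (k * N) x) \<rho> \<le> 1/4" for x
  proof -
    define v where "v = (\<lambda>y. (if x = y then 1 else 0) - \<rho> y)"
    have rs: "sum \<rho> UNIV = 1" using st unfolding stationary_dist_def prob_dist_def by simp
    have r0: "0 \<le> \<rho> y" for y using st unfolding stationary_dist_def prob_dist_def by simp
    have vz: "sum v UNIV = 0" unfolding v_def using rs by (simp add: sum_subtractf)
    have "n1 v \<le> (\<Sum>y\<in>UNIV. (if x = y then 1 else 0) + \<rho> y)"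
      unfolding n1_def v_def by (rule sum_mono) (use r0 in \<open>auto simp: abs_if\<close>)
    also have "\<dots> = 2" using rs by (simp add: sum.distrib)
    finally have n1v: "n1 v \<le> 2" .
    have "vm v (mpow P (k * N)) = (\<lambda>y. mpow P (k * N) x y - \<rho> y)"
      unfolding v_def vm_diff vm_stationary[OF st] by (simp add: vm_def delta_l)
    hence "n1 (\<lambda>y. mpow P (k * N) x y - \<rho> y) \<le> c ^ k * n1 v" using contr vz by metis
    also have "\<dots> \<le> c ^ k * 2" using n1v c0 by (simp add: mult_left_mono)
    finally have "n1 (\<lambda>y. mpow P (k * N) x y - \<rho> y) \<le> 1/4" using k by simp
    thus ?thesis using tv_le_n1[of "mpow P (k * N) x" \<rho>] by simp
  qed
  hence "Max ((\<lambda>s'. tv_dist (mpow P (k * N) s') \<rho>) ` UNIV) \<le> 1/4"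
    by (subst Max_le_iff) auto
  thus ?thesis by blast
qed



lemma stoch_ind:
  assumes T: "stoch_kernel T" and p: "policy pol"
  shows "stoch (induced_chain pol T)"
  unfolding stoch_def
proof (intro conjI allI)
  fix x y show "0 \<le> induced_chain pol T x y"
    using T p unfolding induced_chain_def stoch_kernel_def policy_def
    by (intro sum_nonneg mult_nonneg_nonneg) auto
next
  fix x
  have "(\<Sum>y\<in>UNIV. induced_chain pol T x y) = (\<Sum>y\<in>UNIV. \<Sum>a\<in>UNIV. pol x a * T x a y)"
    unfolding induced_chain_def by simp
  also have "\<dots> = (\<Sum>a\<in>UNIV. \<Sum>y\<in>UNIV. pol x a * T x a y)" by (rule sum.swap)
  also have "\<dots> = (\<Sum>a\<in>UNIV. pol x a * (\<Sum>y\<in>UNIV. T x a y))" by (simp add: sum_distrib_left)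
  also have "\<dots> = 1" using T p unfolding stoch_kernel_def policy_def by simp
  finally show "(\<Sum>y\<in>UNIV. induced_chain pol T x y) = 1" .
qed

lemma n1_mix:
  fixes Q :: "'s::finite \<Rightarrow> 's \<Rightarrow> real"
  assumes Q: "stoch Q" and z: "sum v UNIV = 0" and r: "sum \<rho> UNIV = 1"
    and b: "\<And>x. tv_dist (Q x) \<rho> \<le> b"
  shows "n1 (vm v Q) \<le> 2 * b * n1 v"
proof -
  have eq: "vm v Q y = (\<Sum>x\<in>UNIV. v x * (Q x y - \<rho> y))" for y
  proof -
    have "(\<Sum>x\<in>UNIV. v x * (Q x y - \<rho> y)) = vm v Q y - (\<Sum>x\<in>UNIV. v x) * \<rho> y"
      unfolding vm_def by (simp add: right_diff_distrib sum_subtractf sum_distrib_right)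
    thus ?thesis using z by simp
  qed
  have "n1 (vm v Q) \<le> (\<Sum>y\<in>UNIV. \<Sum>x\<in>UNIV. \<bar>v x\<bar> * \<bar>Q x y - \<rho> y\<bar>)"
    unfolding n1_def eq
    by (intro sum_mono order_trans[OF sum_abs] eq_refl sum.cong) (auto simp: abs_mult)
  also have "\<dots> = (\<Sum>x\<in>UNIV. \<Sum>y\<in>UNIV. \<bar>v x\<bar> * \<bar>Q x y - \<rho> y\<bar>)" by (rule sum.swap)
  also have "\<dots> = (\<Sum>x\<in>UNIV. \<bar>v x\<bar> * n1 (\<lambda>y. Q x y - \<rho> y))"
    unfolding n1_def by (simp add: sum_distrib_left)
  also have "\<dots> \<le> (\<Sum>x\<in>UNIV. \<bar>v x\<bar> * (2 * b))"
  proof (rule sum_mono)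
    fix x
    have "sum (Q x) UNIV = sum \<rho> UNIV" using Q r unfolding stoch_def by simp
    hence "n1 (\<lambda>y. Q x y - \<rho> y) \<le> 2 * b" using n1_le_tv[of "Q x" \<rho>] b[of x] by simp
    thus "\<bar>v x\<bar> * n1 (\<lambda>y. Q x y - \<rho> y) \<le> \<bar>v x\<bar> * (2 * b)" by (simp add: mult_left_mono)
  qed
  also have "\<dots> = 2 * b * n1 v" unfolding n1_def by (simp add: sum_distrib_left mult.commute)
  finally show ?thesis .
qed

lemma sum_ge_neg:
  fixes v f :: "'s::finite \<Rightarrow> real"
  assumes z: "sum v UNIV = 0" and f: "\<And>x. 0 \<le> f x \<and> f x \<le> 1"
  shows "(\<Sum>x\<in>UNIV. v x * f x) \<ge> - n1 v / 2"
proof -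
  have "(v x - \<bar>v x\<bar>) / 2 \<le> v x * f x" for x
  proof (cases "v x \<ge> 0")
    case True thus ?thesis using f[of x] by simp
  next
    case False
    hence "v x * f x \<ge> v x * 1" using f[of x] by (intro mult_left_mono_neg) auto
    thus ?thesis using False by simp
  qed
  hence "(\<Sum>x\<in>UNIV. (v x - \<bar>v x\<bar>) / 2) \<le> (\<Sum>x\<in>UNIV. v x * f x)" by (rule sum_mono)
  moreover have "(\<Sum>x\<in>UNIV. (v x - \<bar>v x\<bar>) / 2) = - n1 v / 2"
    unfolding n1_def using z by (simp add: sum_divide_distrib[symmetric] sum_subtractf)
  ultimately show ?thesis by simp
qed

lemma n1_tri:
  fixes a :: "'s::finite \<Rightarrow> real"
  shows "n1 (\<lambda>y. a y + (\<Sum>k<t. b k y)) \<le> n1 a + (\<Sum>k<t. n1 (b k))"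
proof -
  have "n1 (\<lambda>y. a y + (\<Sum>k<t. b k y)) \<le> (\<Sum>y\<in>UNIV. \<bar>a y\<bar> + (\<Sum>k<t. \<bar>b k y\<bar>))"
    unfolding n1_def by (intro sum_mono order_trans[OF abs_triangle_ineq] add_left_mono sum_abs)
  also have "\<dots> = n1 a + (\<Sum>y\<in>UNIV. \<Sum>k<t. \<bar>b k y\<bar>)" unfolding n1_def by (simp add: sum.distrib)
  also have "(\<Sum>y\<in>UNIV. \<Sum>k<t. \<bar>b k y\<bar>) = (\<Sum>k<t. \<Sum>y\<in>UNIV. \<bar>b k y\<bar>)" by (rule sum.swap)
  finally show ?thesis unfolding n1_def .
qed



theorem lemma7:
  fixes T :: "'s::finite \<Rightarrow> 'a::finite \<Rightarrow> 's \<Rightarrow> real"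
    and piE piI :: "'s \<Rightarrow> 'a \<Rightarrow> real"
    and rhoES rhoIS :: "'s \<Rightarrow> real"
    and ss :: "'s list" and as :: "'a list"
    and D :: "('s \<times> 'a) set"
    and kappa :: real
    and R :: "'s \<Rightarrow> 'a \<Rightarrow> real"
  assumes T: "stoch_kernel T"
    and E_det: "deterministic_policy piE"
    and E_irr: "irreducible_chain (induced_chain piE T)"
    and E_aper: "aperiodic_chain (induced_chain piE T)"
    and E_stat: "stationary_dist (induced_chain piE T) rhoES"
    and traj: "trajectory piE T ss as"
    and D_def: "D = set (zip ss as)"
    and I_pol: "policy piI"
    and I_irr: "irreducible_chain (induced_chain piI T)"
    and I_aper: "aperiodic_chain (induced_chain piI T)"
    and I_stat: "stationary_dist (induced_chain piI T) rhoIS"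
    and kappa: "sa_expect rhoIS piI (\<lambda>s a. if (s, a) \<in> D then 1 else 0) = 1 - kappa"
    and R: "\<forall>s a. 0 \<le> R s a \<and> R s a \<le> 1"
  shows "sa_expect rhoIS piI R \<ge>
           (1 - kappa) * sa_expect rhoES piE R
           - 4 * real (mixing_time (induced_chain piE T) rhoES) * kappa"
proof -
  define PE where "PE = induced_chain piE T"
  define PI where "PI = induced_chain piI T"
  have E_pol: "policy piE" using E_det unfolding deterministic_policy_def by simp
  have sPE: "stoch PE" unfolding PE_def by (rule stoch_ind[OF T E_pol])
  have sPI: "stoch PI" unfolding PI_def by (rule stoch_ind[OF T I_pol])
  have Tnn: "\<And>s a s'. 0 \<le> T s a s'" and Tsum: "\<And>s a. (\<Sum>s'\<in>UNIV. T s a s') = 1"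
    using T unfolding stoch_kernel_def by auto
  have pEnn: "\<And>s a. 0 \<le> piE s a" and pEsum: "\<And>s. (\<Sum>a\<in>UNIV. piE s a) = 1"
    using E_pol unfolding policy_def by auto
  have pInn: "\<And>s a. 0 \<le> piI s a" and pIsum: "\<And>s. (\<Sum>a\<in>UNIV. piI s a) = 1"
    using I_pol unfolding policy_def by auto
  have pIle: "piI s a \<le> 1" for s a
  proof -
    have "piI s a \<le> (\<Sum>a\<in>UNIV. piI s a)" by (rule member_le_sum) (auto simp: pInn)
    thus ?thesis using pIsum by simp
  qed
  have rEnn: "\<And>s. 0 \<le> rhoES s" and rEsum: "(\<Sum>s\<in>UNIV. rhoES s) = 1"
    using E_stat unfolding stationary_dist_def prob_dist_def by auto
  have rInn: "\<And>s. 0 \<le> rhoIS s" and rIsum: "(\<Sum>s\<in>UNIV. rhoIS s) = 1"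
    using I_stat unfolding stationary_dist_def prob_dist_def by auto
  obtain aE where aE1: "\<And>s. piE s (aE s) = 1"
    using E_det unfolding deterministic_policy_def by metis
  have aE0: "piE s a = 0" if "a \<noteq> aE s" for s a
  proof -
    have "1 = piE s (aE s) + (\<Sum>b\<in>UNIV - {aE s}. piE s b)"
      using pEsum[of s] by (simp add: sum.remove[of UNIV "aE s"])
    hence "(\<Sum>b\<in>UNIV - {aE s}. piE s b) = 0" using aE1[of s] by simp
    hence "\<forall>b\<in>UNIV - {aE s}. piE s b = 0" by (subst (asm) sum_nonneg_eq_0_iff) (auto simp: pEnn)
    thus ?thesis using that by simp
  qed
  have Dsub: "a = aE s" if "(s, a) \<in> D" for s a
  proof -
    have "\<exists>n. ss ! n = s \<and> as ! n = a \<and> n < length ss \<and> n < length as"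
      using that D_def in_set_zip[of "(s, a)" ss as] by simp
    then obtain n where n: "ss ! n = s" "as ! n = a" "n < length ss" by blast
    hence "piE s a > 0" using traj unfolding trajectory_def by auto
    thus ?thesis using aE0[of a s] by force
  qed
  define g where "g s = piI s (aE s) * (if (s, aE s) \<in> D then 1 else 0)" for s
  have g01: "0 \<le> g s" "g s \<le> 1" "g s \<le> piI s (aE s)" for s
    unfolding g_def using pInn[of s "aE s"] pIle[of s "aE s"] by auto
  have kap: "(\<Sum>s\<in>UNIV. rhoIS s * g s) = 1 - kappa"
  proof -
    have "(\<Sum>a\<in>UNIV. rhoIS s * piI s a * (if (s, a) \<in> D then 1 else 0)) = rhoIS s * g s" for s
    proof -
      have "(\<Sum>a\<in>UNIV. rhoIS s * piI s a * (if (s, a) \<in> D then 1 else 0))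
          = (\<Sum>a\<in>UNIV. if a = aE s then rhoIS s * g s else 0)"
        by (rule sum.cong) (auto simp: g_def dest: Dsub)
      also have "\<dots> = rhoIS s * g s" by simp
      finally show ?thesis .
    qed
    thus ?thesis using kappa unfolding sa_expect_def by simp
  qed
  define f where "f s = R s (aE s)" for s
  have f01: "0 \<le> f s \<and> f s \<le> 1" for s unfolding f_def using R by auto
  have EI: "sa_expect rhoIS piI R \<ge> (\<Sum>s\<in>UNIV. rhoIS s * g s * f s)"
    unfolding sa_expect_def
  proof (rule sum_mono)
    fix s
    have "rhoIS s * g s * f s \<le> rhoIS s * piI s (aE s) * R s (aE s)"
      unfolding f_def using g01[of s] rInn[of s] R
      by (intro mult_right_mono mult_left_mono) auto
    also have "\<dots> \<le> (\<Sum>a\<in>UNIV. rhoIS s * piI s a * R s a)"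
      by (rule member_le_sum) (use rInn pInn R in auto)
    finally show "rhoIS s * g s * f s \<le> (\<Sum>a\<in>UNIV. rhoIS s * piI s a * R s a)" .
  qed
  have EE: "sa_expect rhoES piE R = (\<Sum>s\<in>UNIV. rhoES s * f s)"
    unfolding sa_expect_def
  proof (rule sum.cong)
    fix s
    have "(\<Sum>a\<in>UNIV. rhoES s * piE s a * R s a) = (\<Sum>a\<in>UNIV. if a = aE s then rhoES s * f s else 0)"
      by (rule sum.cong) (auto simp: f_def aE1 aE0)
    also have "\<dots> = rhoES s * f s" by simp
    finally show "(\<Sum>a\<in>UNIV. rhoES s * piE s a * R s a) = rhoES s * f s" .
  qed simp
  define e where "e = vm rhoIS (\<lambda>x y. PI x y - PE x y)"
  define d where "d = (\<lambda>s. rhoIS s - rhoES s)"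
  have kap0: "0 \<le> kappa"
  proof -
    have "(\<Sum>s\<in>UNIV. rhoIS s * g s) \<le> (\<Sum>s\<in>UNIV. rhoIS s)"
      by (rule sum_mono) (use rInn g01 in \<open>auto intro: mult_left_le\<close>)
    thus ?thesis using kap rIsum by simp
  qed
  have rowdiff: "(\<Sum>y\<in>UNIV. \<bar>PI x y - PE x y\<bar>) \<le> 2 * (1 - g x)" for x
  proof -
    have "\<bar>PI x y - PE x y\<bar> \<le> (\<Sum>a\<in>UNIV. \<bar>piI x a - piE x a\<bar> * T x a y)" for y
    proof -
      have "PI x y - PE x y = (\<Sum>a\<in>UNIV. (piI x a - piE x a) * T x a y)"
        unfolding PI_def PE_def induced_chain_def by (simp add: sum_subtractf left_diff_distrib)
      also have "\<bar>\<dots>\<bar> \<le> (\<Sum>a\<in>UNIV. \<bar>(piI x a - piE x a) * T x a y\<bar>)" by (rule sum_abs)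
      also have "\<dots> = (\<Sum>a\<in>UNIV. \<bar>piI x a - piE x a\<bar> * T x a y)"
        by (rule sum.cong) (auto simp: abs_mult Tnn)
      finally show ?thesis .
    qed
    hence "(\<Sum>y\<in>UNIV. \<bar>PI x y - PE x y\<bar>) \<le> (\<Sum>y\<in>UNIV. \<Sum>a\<in>UNIV. \<bar>piI x a - piE x a\<bar> * T x a y)"
      by (rule sum_mono)
    also have "\<dots> = (\<Sum>a\<in>UNIV. \<Sum>y\<in>UNIV. \<bar>piI x a - piE x a\<bar> * T x a y)" by (rule sum.swap)
    also have "\<dots> = (\<Sum>a\<in>UNIV. \<bar>piI x a - piE x a\<bar>)" by (simp add: sum_distrib_left[symmetric] Tsum)
    also have "\<dots> = \<bar>piI x (aE x) - piE x (aE x)\<bar> + (\<Sum>a\<in>UNIV - {aE x}. \<bar>piI x a - piE x a\<bar>)"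
      by (simp add: sum.remove[of UNIV "aE x"])
    also have "(\<Sum>a\<in>UNIV - {aE x}. \<bar>piI x a - piE x a\<bar>) = (\<Sum>a\<in>UNIV - {aE x}. piI x a)"
      by (rule sum.cong) (auto simp: aE0 pInn)
    also have "(\<Sum>a\<in>UNIV - {aE x}. piI x a) = 1 - piI x (aE x)"
      using pIsum[of x] by (simp add: sum.remove[of UNIV "aE x"])
    also have "\<bar>piI x (aE x) - piE x (aE x)\<bar> = 1 - piI x (aE x)"
      using aE1[of x] pIle[of x "aE x"] by simp
    finally show ?thesis using g01[of x] by simp
  qed
  have n1e: "n1 e \<le> 2 * kappa"
  proof -
    have "n1 e \<le> (\<Sum>y\<in>UNIV. \<Sum>x\<in>UNIV. rhoIS x * \<bar>PI x y - PE x y\<bar>)"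
      unfolding n1_def e_def vm_def
      by (intro sum_mono order_trans[OF sum_abs] eq_refl sum.cong) (auto simp: abs_mult rInn)
    also have "\<dots> = (\<Sum>x\<in>UNIV. \<Sum>y\<in>UNIV. rhoIS x * \<bar>PI x y - PE x y\<bar>)" by (rule sum.swap)
    also have "\<dots> = (\<Sum>x\<in>UNIV. rhoIS x * (\<Sum>y\<in>UNIV. \<bar>PI x y - PE x y\<bar>))"
      by (simp add: sum_distrib_left)
    also have "\<dots> \<le> (\<Sum>x\<in>UNIV. rhoIS x * (2 * (1 - g x)))"
      by (rule sum_mono) (use rowdiff rInn in \<open>auto intro: mult_left_mono\<close>)
    also have "\<dots> = (\<Sum>x\<in>UNIV. 2 * rhoIS x - 2 * (rhoIS x * g x))"
      by (rule sum.cong) (auto simp: algebra_simps)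
    also have "\<dots> = 2 * ((\<Sum>x\<in>UNIV. rhoIS x) - (\<Sum>x\<in>UNIV. rhoIS x * g x))"
      by (simp add: sum_subtractf sum_distrib_left)
    also have "\<dots> = 2 * kappa" using kap rIsum by simp
    finally show ?thesis .
  qed
  have statI: "vm rhoIS PI = rhoIS"
    using I_stat unfolding stationary_dist_def vm_def[abs_def] PI_def by simp
  have statE: "vm rhoES PE = rhoES"
    using E_stat unfolding stationary_dist_def vm_def[abs_def] PE_def by simp
  have deq: "(\<lambda>y. vm d PE y + e y) = d"
  proof -
    have "vm d PE = (\<lambda>y. vm rhoIS PE y - vm rhoES PE y)" unfolding d_def by (rule vm_diff)
    moreover have "e = (\<lambda>y. vm rhoIS PI y - vm rhoIS PE y)"
      unfolding e_def vm_def by (simp add: right_diff_distrib sum_subtractf)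
    ultimately show ?thesis unfolding d_def using statI statE by auto
  qed
  have tele: "d = (\<lambda>y. vm d (mpow PE t) y + (\<Sum>k<t. vm e (mpow PE k) y))" for t
  proof (induction t)
    case 0
    then show ?case by (simp only: vm_mpow0 lessThan_0 sum.empty add_0_right)
  next
    case (Suc t)
    have "vm d (mpow PE t) = vm (\<lambda>y. vm d PE y + e y) (mpow PE t)" by (simp only: deq)
    also have "\<dots> = (\<lambda>y. vm (vm d PE) (mpow PE t) y + vm e (mpow PE t) y)" by (rule vm_add)
    also have "vm (vm d PE) (mpow PE t) = vm d (mpow PE (Suc t))"
      using vm_mpow_add[of d PE 1 t] unfolding vm_mpow1 by simp
    finally have "vm d (mpow PE t) = (\<lambda>y. vm d (mpow PE (Suc t)) y + vm e (mpow PE t) y)" .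
    hence "d = (\<lambda>y. vm d (mpow PE (Suc t)) y + vm e (mpow PE t) y + (\<Sum>k<t. vm e (mpow PE k) y))"
      using Suc.IH by (metis (no_types, lifting))
    thus ?case unfolding sum.lessThan_Suc by (simp add: ac_simps del: mpow.simps)
  qed
  define tau where "tau = mixing_time PE rhoES"
  have mixP: "Max ((\<lambda>s'. tv_dist (mpow PE tau s') rhoES) ` UNIV) \<le> 1/4"
    unfolding tau_def mixing_time_def
    by (rule LeastI_ex) (rule mixing_exists[OF sPE E_irr[folded PE_def] E_aper[folded PE_def] E_stat[folded PE_def]])
  have tvt: "tv_dist (mpow PE tau x) rhoES \<le> 1/4" for x
    using mixP by (subst (asm) Max_le_iff) auto
  have dz: "sum d UNIV = 0" unfolding d_def using rIsum rEsum by (simp add: sum_subtractf)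
  have half: "n1 (vm d (mpow PE tau)) \<le> n1 d / 2"
    using n1_mix[OF stoch_mpow[OF sPE] dz rEsum tvt] by simp
  have "n1 d \<le> n1 (vm d (mpow PE tau)) + (\<Sum>k<tau. n1 (vm e (mpow PE k)))"
    using n1_tri[where a="vm d (mpow PE tau)" and t=tau and b="\<lambda>k. vm e (mpow PE k)"] tele[of tau] by simp
  also have "(\<Sum>k<tau. n1 (vm e (mpow PE k))) \<le> (\<Sum>k<tau. 2 * kappa)"
    by (rule sum_mono) (rule order_trans[OF n1_vm[OF stoch_mpow[OF sPE]] n1e])
  finally have n1d: "n1 d \<le> 4 * real tau * kappa" using half by simp
  have dsum: "(\<Sum>s\<in>UNIV. d s * f s) \<ge> - n1 d / 2" by (rule sum_ge_neg[OF dz f01])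
  have A1: "(\<Sum>s\<in>UNIV. rhoIS s * g s * f s) \<ge> (\<Sum>s\<in>UNIV. rhoIS s * f s) - kappa"
  proof -
    have "(\<Sum>s\<in>UNIV. rhoIS s * f s) - (\<Sum>s\<in>UNIV. rhoIS s * g s * f s) = (\<Sum>s\<in>UNIV. rhoIS s * (1 - g s) * f s)"
      by (simp add: sum_subtractf[symmetric] algebra_simps)
    also have "\<dots> \<le> (\<Sum>s\<in>UNIV. rhoIS s * (1 - g s))"
      by (rule sum_mono) (use rInn g01 f01 in \<open>auto intro: mult_left_le mult_nonneg_nonneg\<close>)
    also have "\<dots> = kappa" using kap rIsum by (simp add: right_diff_distrib sum_subtractf)
    finally show ?thesis by simp
  qed
  have A2: "(\<Sum>s\<in>UNIV. rhoIS s * f s) = (\<Sum>s\<in>UNIV. rhoES s * f s) + (\<Sum>s\<in>UNIV. d s * f s)"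
    unfolding d_def by (simp add: sum.distrib[symmetric] algebra_simps)
  have EEnn: "0 \<le> (\<Sum>s\<in>UNIV. rhoES s * f s)" using rEnn f01 by (auto intro: sum_nonneg)
  have goal_eq: "(1 - kappa) * sa_expect rhoES piE R - 4 * real (mixing_time (induced_chain piE T) rhoES) * kappa
      = (\<Sum>s\<in>UNIV. rhoES s * f s) - kappa * (\<Sum>s\<in>UNIV. rhoES s * f s) - 4 * (real tau * kappa)"
    unfolding EE tau_def PE_def by (simp add: algebra_simps)
  show ?thesis
  proof (cases "tau = 0")
    case False
    hence "1 \<le> real tau" by simp
    hence "1 * kappa \<le> real tau * kappa" using kap0 by (rule mult_right_mono)
    hence p2: "kappa \<le> 2 * (real tau * kappa)" using kap0 by simp
    have p1: "0 \<le> kappa * (\<Sum>s\<in>UNIV. rhoES s * f s)" using kap0 EEnn by simp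
    have n1d': "n1 d \<le> 4 * (real tau * kappa)" using n1d by (simp add: mult.assoc)
    show ?thesis unfolding goal_eq using EI A1 A2 dsum n1d' p1 p2 by linarith
  next
    case True
    have big: "3/4 \<le> rhoES x" for x
    proof -
      have "\<bar>(\<Sum>z\<in>{x}. mpow PE 0 x z) - (\<Sum>z\<in>{x}. rhoES z)\<bar> \<le> 1/4"
        using tv_ge[where M="{x}" and p="mpow PE 0 x" and q=rhoES] tvt[of x] True by simp
      thus ?thesis by (simp add: abs_if split: if_splits)
    qed
    have single: "x = y" for x y :: 's
    proof (rule ccontr)
      assume xy: "x \<noteq> y"
      have "(\<Sum>z\<in>{x, y}. rhoES z) \<le> (\<Sum>z\<in>UNIV. rhoES z)" by (rule sum_mono2) (auto simp: rEnn)
      thus False using xy big[of x] big[of y] rEsum by simp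
    qed
    obtain x0 :: 's where "True" by simp
    have U: "UNIV = {x0}" using single by auto
    have sU: "sum h UNIV = h x0" for h :: "'s \<Rightarrow> real" unfolding U by simp
    have "rhoIS x0 = 1" "rhoES x0 = 1" using rIsum rEsum unfolding sU by auto
    hence "g x0 = 1 - kappa" using kap unfolding sU by simp
    show ?thesis unfolding goal_eq using EI True unfolding sU
      by (simp add: \<open>rhoIS x0 = 1\<close> \<open>rhoES x0 = 1\<close> \<open>g x0 = 1 - kappa\<close> algebra_simps)
  qed
qed


end
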